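(* Let $\zeta\in(0,1]$, $n'\ge1$, $p_1,\dots,p_{n'}\ge 0$ and $x_1,\dots,x_{n'}\in[0,1]$. Let $\mathcal G$ be a family of pairwise disjoint nonempty subsets ("groups") of $\{1,\dots,n'\}$ such that for each $G'\in\mathcal G$: $\sum_{j\in G'}x_j\ge 1/10$, and $p_j\ge p_{j'}/10$ for all $j,j'\in G'$. Let $G=\bigcup_{G'\in\mathcal G}G'$ and $\bar G=\{1,\dots,n'\}\setminus G$. Let $X_1,\dots,X_{n'}$ be $\{0,1\}$-valued random variables with $\mathbb E[X_j]=x_j$ for all $j$, $\mathbb E[X_jX_{j'}]\le x_jx_{j'}$ for all $j\ne j'$, and $\mathbb E[X_jX_{j'}]\le(1-\zeta)x_jx_{j'}$ for all $j\ne j'$ lying in a common group $G'\in\mathcal G$. With $L=\sum_{j=1}^{n'}x_jp_j$, $Q=\sum_{j=1}^{n'}x_jp_j^2$, $\bar Q=\sum_{j\in\bar G}x_jp_j^2$, we have $$\mathbb E\Big[\sum_{j=1}^{n'}p_jX_j(p_1X_1+\dots+p_jX_j)\Big]\le\Big(1-\frac{\zeta}{200}\Big)Q+\frac{\zeta}{200}\bar Q+\frac12L^2.$$ *)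

theory Defs
  imports "HOL-Probability.Probability"
begin

end

theory Submission imports Defs begin

lemma sq_sum_pairs:
  fixes a :: "nat \<Rightarrow> real"
  assumes "finite A"
  shows "(\<Sum>j\<in>A. a j)^2 = (\<Sum>j\<in>A. (a j)^2) + 2 * (\<Sum>j\<in>A. \<Sum>i\<in>{i\<in>A. i<j}. a i * a j)"
  using assms
proof (induction A rule: finite_linorder_max_induct)
  case empty
  then show ?case by simp
next
  case (insert b A)
  have bA: "b \<notin> A" using insert by auto
  have s1: "{i\<in>insert b A. i<b} = A" using insert by auto
  have s2: "\<And>j. j\<in>A \<Longrightarrow> {i\<in>insert b A. i<j} = {i\<in>A. i<j}" using insert by auto
  have "(\<Sum>j\<in>insert b A. \<Sum>i\<in>{i\<in>insert b A. i<j}. a i * a j)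
        = (\<Sum>i\<in>A. a i * a b) + (\<Sum>j\<in>A. \<Sum>i\<in>{i\<in>A. i<j}. a i * a j)"
    using insert bA s1 s2 by (simp add: sum.insert)
  moreover have "(\<Sum>i\<in>A. a i * a b) = a b * (\<Sum>i\<in>A. a i)"
    by (simp add: sum_distrib_left mult.commute)
  moreover have "(\<Sum>j\<in>insert b A. a j) = a b + (\<Sum>j\<in>A. a j)"
    using insert bA by simp
  moreover have "(\<Sum>j\<in>insert b A. (a j)^2) = (a b)^2 + (\<Sum>j\<in>A. (a j)^2)"
    using insert bA by simp
  ultimately show ?case using insert.IH
    by (simp add: power2_eq_square algebra_simps)
qed

lemma group_bound:
  fixes x p :: "nat \<Rightarrow> real"
  assumes "finite G" "G \<noteq> {}" "\<And>j. j\<in>G \<Longrightarrow> x j \<ge> 0" "\<And>j. j\<in>G \<Longrightarrow> p j \<ge> 0"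
    "(\<Sum>j\<in>G. x j) \<ge> 1/10" "\<And>j j'. j\<in>G \<Longrightarrow> j'\<in>G \<Longrightarrow> p j \<ge> p j' / 10"
  shows "(\<Sum>j\<in>G. x j * (p j)^2) / 100 \<le> (\<Sum>j\<in>G. x j * p j)^2"
proof -
  define m where "m = Max (p ` G)"
  have mle: "\<And>j. j\<in>G \<Longrightarrow> p j \<le> m" unfolding m_def using assms(1) by auto
  have "m \<in> p ` G" unfolding m_def using assms(1,2) by (intro Max_in) auto
  then obtain k where k: "k\<in>G" "p k = m" by auto
  have m0: "m \<ge> 0" using k assms(4) by fastforce
  have pge: "\<And>j. j\<in>G \<Longrightarrow> p j \<ge> m/10" using assms(6) k by auto
  define s where "s = (\<Sum>j\<in>G. x j * p j)"
  have "(\<Sum>j\<in>G. x j * (m/10)) \<le> s" unfolding s_def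
  proof (rule sum_mono)
    fix j assume "j\<in>G"
    then show "x j * (m/10) \<le> x j * p j" using assms(3) pge by (intro mult_left_mono) auto
  qed
  moreover have "(\<Sum>j\<in>G. x j * (m/10)) = (m/10) * (\<Sum>j\<in>G. x j)"
    by (simp add: sum_distrib_left mult.commute)
  moreover have "(m/10) * (\<Sum>j\<in>G. x j) \<ge> (m/10) * (1/10)"
    using assms(5) m0 by (intro mult_left_mono) auto
  ultimately have sm: "s \<ge> m/100" by simp
  have s0: "s \<ge> 0" using sm m0 by linarith
  have "(\<Sum>j\<in>G. x j * (p j)^2) \<le> (\<Sum>j\<in>G. m * (x j * p j))"
    apply (rule sum_mono)
    using mle assms(3,4) by (simp add: power2_eq_square mult_left_mono mult_right_mono mult.left_commute)
  also have "\<dots> = m * s" unfolding s_def by (simp add: sum_distrib_left)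
  also have "\<dots> \<le> 100 * s * s" proof -
    have "m \<le> 100 * s" using sm by simp
    then show ?thesis by (rule mult_right_mono[OF _ s0])
  qed
  finally show ?thesis unfolding s_def[symmetric] by (simp add: power2_eq_square)
qed
theorem lemma3:
  fixes M :: "'a measure" and X :: "nat \<Rightarrow> 'a \<Rightarrow> real"
    and \<zeta> :: real and n' :: nat and p x :: "nat \<Rightarrow> real" and \<G> :: "nat set set"
  assumes "prob_space M"
    and "0 < \<zeta>" "\<zeta> \<le> 1" "1 \<le> n'"
    and "\<And>j. j \<in> {1..n'} \<Longrightarrow> p j \<ge> 0"
    and "\<And>j. j \<in> {1..n'} \<Longrightarrow> 0 \<le> x j \<and> x j \<le> 1"
    and "\<And>G'. G' \<in> \<G> \<Longrightarrow> G' \<subseteq> {1..n'} \<and> G' \<noteq> {}"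
    and "\<And>G1 G2. G1 \<in> \<G> \<Longrightarrow> G2 \<in> \<G> \<Longrightarrow> G1 \<noteq> G2 \<Longrightarrow> G1 \<inter> G2 = {}"
    and "\<And>G'. G' \<in> \<G> \<Longrightarrow> (\<Sum>j\<in>G'. x j) \<ge> 1/10"
    and "\<And>G' j j'. G' \<in> \<G> \<Longrightarrow> j \<in> G' \<Longrightarrow> j' \<in> G' \<Longrightarrow> p j \<ge> p j' / 10"
    and "\<And>j. j \<in> {1..n'} \<Longrightarrow> X j \<in> borel_measurable M"
    and "\<And>j \<omega>. j \<in> {1..n'} \<Longrightarrow> \<omega> \<in> space M \<Longrightarrow> X j \<omega> \<in> {0, 1}"
    and "\<And>j. j \<in> {1..n'} \<Longrightarrow> prob_space.expectation M (X j) = x j"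
    and "\<And>j j'. j \<in> {1..n'} \<Longrightarrow> j' \<in> {1..n'} \<Longrightarrow> j \<noteq> j' \<Longrightarrow>
           prob_space.expectation M (\<lambda>\<omega>. X j \<omega> * X j' \<omega>) \<le> x j * x j'"
    and "\<And>G' j j'. G' \<in> \<G> \<Longrightarrow> j \<in> G' \<Longrightarrow> j' \<in> G' \<Longrightarrow> j \<noteq> j' \<Longrightarrow>
           prob_space.expectation M (\<lambda>\<omega>. X j \<omega> * X j' \<omega>) \<le> (1 - \<zeta>) * x j * x j'"
  shows "prob_space.expectation M
           (\<lambda>\<omega>. \<Sum>j=1..n'. p j * X j \<omega> * (\<Sum>i=1..j. p i * X i \<omega>))
         \<le> (1 - \<zeta> / 200) * (\<Sum>j=1..n'. x j * (p j)\<^sup>2)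
           + \<zeta> / 200 * (\<Sum>j\<in>{1..n'} - \<Union>\<G>. x j * (p j)\<^sup>2)
           + 1/2 * (\<Sum>j=1..n'. x j * p j)\<^sup>2"
proof -
  interpret prob_space M by (rule assms(1))
  define S where "S = {1..n'}"
  define e where "e i j = expectation (\<lambda>\<omega>. X i \<omega> * X j \<omega>)" for i j
  define a where "a j = x j * p j" for j
  have fin: "finite S" unfolding S_def by simp
  have GS: "\<And>G. G \<in> \<G> \<Longrightarrow> G \<subseteq> S" using assms(7) unfolding S_def by auto
  have finG: "finite \<G>"
    by (rule finite_subset[of _ "Pow S"]) (use GS fin in auto)
  have UGS: "\<Union>\<G> \<subseteq> S" using GS by auto
  have intg: "integrable M (\<lambda>\<omega>. X i \<omega> * X j \<omega>)" if "i\<in>S" "j\<in>S" for i j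
  proof (rule integrable_const_bound[where B=1])
    show "AE \<omega> in M. norm (X i \<omega> * X j \<omega>) \<le> 1"
    proof (rule AE_I2)
      fix \<omega> assume w: "\<omega> \<in> space M"
      have "X i \<omega> \<in> {0,1}" "X j \<omega> \<in> {0,1}" using assms(12) that w unfolding S_def by auto
      then show "norm (X i \<omega> * X j \<omega>) \<le> 1" by auto
    qed
    show "(\<lambda>\<omega>. X i \<omega> * X j \<omega>) \<in> borel_measurable M"
      using assms(11) that unfolding S_def by auto
  qed
  have E1: "expectation (\<lambda>\<omega>. \<Sum>j=1..n'. p j * X j \<omega> * (\<Sum>i=1..j. p i * X i \<omega>))
      = (\<Sum>j\<in>S. \<Sum>i\<in>{1..j}. p i * p j * e i j)"
  proof -
    have "expectation (\<lambda>\<omega>. \<Sum>j=1..n'. p j * X j \<omega> * (\<Sum>i=1..j. p i * X i \<omega>))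
       = expectation (\<lambda>\<omega>. \<Sum>j\<in>S. \<Sum>i\<in>{1..j}. (p i * p j) * (X i \<omega> * X j \<omega>))"
      unfolding S_def by (rule Bochner_Integration.integral_cong[OF refl]) (auto simp: sum_distrib_left sum_distrib_right intro!: sum.cong)
    also have "\<dots> = (\<Sum>j\<in>S. expectation (\<lambda>\<omega>. \<Sum>i\<in>{1..j}. (p i * p j) * (X i \<omega> * X j \<omega>)))"
      by (rule Bochner_Integration.integral_sum)
         (auto simp: S_def intro!: integrable_sum integrable_mult_right intg)
    also have "\<dots> = (\<Sum>j\<in>S. \<Sum>i\<in>{1..j}. p i * p j * e i j)"
    proof (rule sum.cong[OF refl])
      fix j assume j: "j \<in> S"
      show "expectation (\<lambda>\<omega>. \<Sum>i\<in>{1..j}. (p i * p j) * (X i \<omega> * X j \<omega>)) = (\<Sum>i\<in>{1..j}. p i * p j * e i j)"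
        by (subst Bochner_Integration.integral_sum)
           (use j in \<open>auto simp: S_def e_def integral_mult_right_zero intro!: integrable_mult_right intg\<close>)
    qed
    finally show ?thesis .
  qed
  have ejj: "e j j = x j" if "j \<in> S" for j
  proof -
    have "e j j = expectation (X j)" unfolding e_def
      by (rule Bochner_Integration.integral_cong[OF refl]) (use assms(12) that in \<open>auto simp: S_def\<close>)
    then show ?thesis using assms(13) that unfolding S_def by simp
  qed
  have split: "(\<Sum>i\<in>{1..j}. p i * p j * e i j) = x j * (p j)^2 + (\<Sum>i\<in>{i\<in>S. i<j}. p i * p j * e i j)"
    if "j \<in> S" for j
  proof -
    have "{1..j} = insert j {i\<in>S. i<j}" using that unfolding S_def by auto
    then show ?thesis using that fin ejj[OF that] by (simp add: power2_eq_square algebra_simps)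
  qed
  define c where "c i j = (\<Sum>G\<in>\<G>. if i\<in>G \<and> j\<in>G then a i * a j else 0)" for i j
  have pairb: "p i * p j * e i j \<le> a i * a j - \<zeta> * c i j" if "i\<in>S" "j\<in>S" "i<j" for i j
  proof (cases "\<exists>G0\<in>\<G>. i\<in>G0 \<and> j\<in>G0")
    case True
    then obtain G0 where G0: "G0\<in>\<G>" "i\<in>G0" "j\<in>G0" by auto
    have "c i j = (if i\<in>G0 \<and> j\<in>G0 then a i * a j else 0) + (\<Sum>G\<in>\<G>-{G0}. if i\<in>G \<and> j\<in>G then a i * a j else 0)"
      unfolding c_def using finG G0(1) by (simp add: sum.remove)
    also have "(\<Sum>G\<in>\<G>-{G0}. if i\<in>G \<and> j\<in>G then a i * a j else 0) = 0"
    proof (rule sum.neutral, rule ballI)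
      fix G assume "G \<in> \<G> - {G0}"
      then have "G \<inter> G0 = {}" using assms(8) G0(1) by auto
      then show "(if i\<in>G \<and> j\<in>G then a i * a j else 0) = 0" using G0 by auto
    qed
    finally have c: "c i j = a i * a j" using G0 by simp
    have "e i j \<le> (1 - \<zeta>) * x i * x j" unfolding e_def using assms(15)[OF G0] that by simp
    then have "p i * p j * e i j \<le> p i * p j * ((1 - \<zeta>) * x i * x j)"
      using assms(5) that unfolding S_def by (intro mult_left_mono) auto
    then show ?thesis unfolding c a_def by (simp add: algebra_simps)
  next
    case False
    then have c: "c i j = 0" unfolding c_def by (intro sum.neutral) auto
    have "e i j \<le> x i * x j" unfolding e_def using assms(14) that unfolding S_def by simp
    then have "p i * p j * e i j \<le> p i * p j * (x i * x j)"
      using assms(5) that unfolding S_def by (intro mult_left_mono) auto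
    then show ?thesis unfolding c a_def by (simp add: algebra_simps)
  qed
  define Q where "Q = (\<Sum>j\<in>S. x j * (p j)^2)"
  define TS where "TS = (\<Sum>j\<in>S. \<Sum>i\<in>{i\<in>S. i<j}. a i * a j)"
  define W where "W = (\<Sum>j\<in>S. \<Sum>i\<in>{i\<in>S. i<j}. c i j)"
  define T where "T G = (\<Sum>j\<in>G. \<Sum>i\<in>{i\<in>G. i<j}. a i * a j)" for G
  have Ebound: "(\<Sum>j\<in>S. \<Sum>i\<in>{1..j}. p i * p j * e i j) \<le> Q + TS - \<zeta> * W"
  proof -
    have "(\<Sum>j\<in>S. \<Sum>i\<in>{1..j}. p i * p j * e i j)
        = (\<Sum>j\<in>S. x j * (p j)^2 + (\<Sum>i\<in>{i\<in>S. i<j}. p i * p j * e i j))"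
      by (rule sum.cong[OF refl]) (rule split)
    also have "\<dots> \<le> (\<Sum>j\<in>S. x j * (p j)^2 + (\<Sum>i\<in>{i\<in>S. i<j}. a i * a j - \<zeta> * c i j))"
      by (intro sum_mono add_left_mono) (auto intro: pairb)
    also have "\<dots> = Q + TS - \<zeta> * W"
      unfolding Q_def TS_def W_def
      by (simp add: sum.distrib sum_subtractf sum_distrib_left)
    finally show ?thesis .
  qed
  have WT: "W = (\<Sum>G\<in>\<G>. T G)"
  proof -
    have "W = (\<Sum>j\<in>S. \<Sum>G\<in>\<G>. \<Sum>i\<in>{i\<in>S. i<j}. if i\<in>G \<and> j\<in>G then a i * a j else 0)"
      unfolding W_def c_def by (rule sum.cong[OF refl]) (rule sum.swap)
    also have "\<dots> = (\<Sum>G\<in>\<G>. \<Sum>j\<in>S. \<Sum>i\<in>{i\<in>S. i<j}. if i\<in>G \<and> j\<in>G then a i * a j else 0)"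
      by (rule sum.swap)
    also have "\<dots> = (\<Sum>G\<in>\<G>. T G)"
    proof (rule sum.cong[OF refl])
      fix G assume G: "G \<in> \<G>"
      have "(\<Sum>j\<in>S. \<Sum>i\<in>{i\<in>S. i<j}. if i\<in>G \<and> j\<in>G then a i * a j else 0)
          = (\<Sum>j\<in>S. if j\<in>G then (\<Sum>i\<in>{i\<in>S. i<j}. if i\<in>G then a i * a j else 0) else 0)"
        by (rule sum.cong[OF refl]) auto
      also have "\<dots> = (\<Sum>j\<in>S. if j\<in>G then (\<Sum>i\<in>{i\<in>{i\<in>S. i<j}. i\<in>G}. a i * a j) else 0)"
      proof (rule sum.cong[OF refl])
        fix j
        have "finite {i\<in>S. i<j}" using fin by auto
        then show "(if j\<in>G then (\<Sum>i\<in>{i\<in>S. i<j}. if i\<in>G then a i * a j else 0) else 0)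
           = (if j\<in>G then (\<Sum>i\<in>{i\<in>{i\<in>S. i<j}. i\<in>G}. a i * a j) else 0)"
          using sum.inter_filter[of "{i\<in>S. i<j}" "\<lambda>i. a i * a j" "\<lambda>i. i\<in>G"] by simp
      qed
      also have "\<dots> = (\<Sum>j\<in>{j\<in>S. j\<in>G}. \<Sum>i\<in>{i\<in>{i\<in>S. i<j}. i\<in>G}. a i * a j)"
        by (rule sum.inter_filter[OF fin, symmetric])
      also have "\<dots> = T G" unfolding T_def
      proof (rule sum.cong)
        show "{j\<in>S. j\<in>G} = G" using GS[OF G] by auto
        fix j show "(\<Sum>i\<in>{i\<in>{i\<in>S. i<j}. i\<in>G}. a i * a j) = (\<Sum>i\<in>{i\<in>G. i<j}. a i * a j)"
          using GS[OF G] by (intro sum.cong) auto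
      qed
      finally show "(\<Sum>j\<in>S. \<Sum>i\<in>{i\<in>S. i<j}. if i\<in>G \<and> j\<in>G then a i * a j else 0) = T G" .
    qed
    finally show ?thesis .
  qed
  define D where "D = (\<Sum>j\<in>S. (a j)^2)"
  define L where "L = (\<Sum>j\<in>S. a j)"
  have LD: "L^2 = D + 2 * TS" unfolding L_def D_def TS_def by (rule sq_sum_pairs[OF fin])
  have finGs: "\<forall>G\<in>\<G>. finite G" using GS fin finite_subset by blast
  have disj: "\<forall>A\<in>\<G>. \<forall>B\<in>\<G>. A \<noteq> B \<longrightarrow> A \<inter> B = {}" using assms(8) by blast
  define QG where "QG = (\<Sum>j\<in>\<Union>\<G>. x j * (p j)^2)"
  define Qbar where "Qbar = (\<Sum>j\<in>S - \<Union>\<G>. x j * (p j)^2)"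
  have QQ: "Q = Qbar + QG" unfolding Q_def Qbar_def QG_def by (rule sum.subset_diff[OF UGS fin])
  have QGs: "QG = (\<Sum>G\<in>\<G>. \<Sum>j\<in>G. x j * (p j)^2)"
    unfolding QG_def using sum.Union_disjoint[OF finGs disj] by simp
  define DG where "DG = (\<Sum>j\<in>\<Union>\<G>. (a j)^2)"
  have DGs: "DG = (\<Sum>G\<in>\<G>. \<Sum>j\<in>G. (a j)^2)"
    unfolding DG_def using sum.Union_disjoint[OF finGs disj] by simp
  have DGD: "DG \<le> D" unfolding DG_def D_def by (rule sum_mono2[OF fin UGS]) auto
  have DG0: "0 \<le> DG" unfolding DG_def by (rule sum_nonneg) auto
  have grp: "(\<Sum>j\<in>G. x j * (p j)^2) / 200 \<le> (\<Sum>j\<in>G. (a j)^2) / 2 + T G" if G: "G \<in> \<G>" for G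
  proof -
    have "(\<Sum>j\<in>G. x j * (p j)^2) / 100 \<le> (\<Sum>j\<in>G. x j * p j)^2"
    proof (rule group_bound)
      show "finite G" using finGs G by auto
      show "G \<noteq> {}" using assms(7) G by auto
      show "\<And>j. j\<in>G \<Longrightarrow> x j \<ge> 0" using assms(6) GS[OF G] unfolding S_def by auto
      show "\<And>j. j\<in>G \<Longrightarrow> p j \<ge> 0" using assms(5) GS[OF G] unfolding S_def by auto
      show "(\<Sum>j\<in>G. x j) \<ge> 1/10" using assms(9) G by auto
      show "\<And>j j'. j\<in>G \<Longrightarrow> j'\<in>G \<Longrightarrow> p j \<ge> p j' / 10" using assms(10) G by auto
    qed
    moreover have "(\<Sum>j\<in>G. x j * p j)^2 = (\<Sum>j\<in>G. (a j)^2) + 2 * T G"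
      unfolding T_def a_def[symmetric] using finGs G by (intro sq_sum_pairs) auto
    ultimately show ?thesis by simp
  qed
  have "QG / 200 \<le> DG / 2 + W"
  proof -
    have "QG / 200 = (\<Sum>G\<in>\<G>. (\<Sum>j\<in>G. x j * (p j)^2) / 200)" unfolding QGs by (simp add: sum_divide_distrib)
    also have "\<dots> \<le> (\<Sum>G\<in>\<G>. (\<Sum>j\<in>G. (a j)^2) / 2 + T G)" by (rule sum_mono) (rule grp)
    also have "\<dots> = DG / 2 + W" unfolding DGs WT by (simp add: sum.distrib sum_divide_distrib)
    finally show ?thesis .
  qed
  then have h1: "\<zeta> * (QG / 200) \<le> \<zeta> * (DG / 2 + W)" using assms(2) by (intro mult_left_mono) auto
  have h2: "\<zeta> * DG \<le> DG" using mult_right_mono[OF assms(3) DG0] by simp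
  have main: "Q + TS - \<zeta> * W \<le> (1 - \<zeta> / 200) * Q + \<zeta> / 200 * Qbar + 1/2 * L^2"
    using h1 h2 DGD QQ LD by (simp add: algebra_simps)
  have eqs: "(\<Sum>j=1..n'. x j * (p j)\<^sup>2) = Q" "(\<Sum>j\<in>{1..n'} - \<Union>\<G>. x j * (p j)\<^sup>2) = Qbar"
    "(\<Sum>j=1..n'. x j * p j) = L"
    unfolding Q_def Qbar_def L_def S_def a_def by simp_all
  show ?thesis unfolding eqs using E1 Ebound main by linarith
qed

end
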